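(* Let $(G,\sigma)$, $(A,\pi_A)$, $(B,\pi_B)$ be connected signed graphs with $G=A\,\square\,B$ (so $V(G)=V(A)\times V(B)$). Then $\sigma$ is equivalent to the signature of $(A,\pi_A)\,\square\,(B,\pi_B)$ if and only if all three of the following hold: (1) every $A$-layer of $(G,\sigma)$, identified with $A$ via the projection, carries a signature equivalent to $\pi_A$; (2) at least one $B$-layer of $(G,\sigma)$, identified with $B$ via the projection, carries a signature equivalent to $\pi_B$; (3) for every edge $e$ of $A$ and every pair of distinct copies $e_1,e_2$ of $e$ in $G$, if $e_1$ and $e_2$ lie on a common $4$-cycle of $G$, then this $4$-cycle is balanced in $(G,\sigma)$.
   Context: A signed graph $(G,\sigma)$ is a simple loopless undirected graph $G$ with a signature $\sigma:E(G)\to\{+1,-1\}$. Switching a vertex negates the signs of its incident edges; two signatures of the same graph are equivalent if one is obtained from the other by switching a set of vertices. A cycle is balanced if the product of the signs of its edges is $+1$. The Cartesian product $(A,\pi_A)\,\square\,(B,\pi_B)$ is the signed graph on $A\,\square\,B$ where $(a,b_1)(a,b_2)$ has sign $\pi_B(b_1b_2)$ and $(a_1,b)(a_2,b)$ has sign $\pi_A(a_1a_2)$. For $b\in V(B)$, the $A$-layer at $b$ is the subgraph of $G$ induced by $V(A)\times\{b\}$; $B$-layers are defined symmetrically. A copy of an edge $a_1a_2$ of $A$ is an edge $(a_1,b)(a_2,b)$ of $G$ for some $b\in V(B)$. *)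

theory Defs
  imports Main
begin

definition simple_graph :: "'v set \<Rightarrow> 'v set set \<Rightarrow> bool" where
  "simple_graph V E \<longleftrightarrow> finite V \<and> (\<forall>e\<in>E. \<exists>u v. e = {u, v} \<and> u \<noteq> v \<and> u \<in> V \<and> v \<in> V)"

definition connected_graph :: "'v set \<Rightarrow> 'v set set \<Rightarrow> bool" where
  "connected_graph V E \<longleftrightarrow> V \<noteq> {} \<and>
     (\<forall>u\<in>V. \<forall>v\<in>V. (u, v) \<in> {(x, y). {x, y} \<in> E}\<^sup>*)"

definition signature :: "'v set set \<Rightarrow> ('v set \<Rightarrow> int) \<Rightarrow> bool" where
  "signature E s \<longleftrightarrow> (\<forall>e\<in>E. s e = 1 \<or> s e = -1)"

definition switch :: "'v set \<Rightarrow> ('v set \<Rightarrow> int) \<Rightarrow> 'v set \<Rightarrow> int" where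
  "switch S s e = (if card (e \<inter> S) = 1 then - s e else s e)"

definition sig_equiv :: "'v set \<Rightarrow> 'v set set \<Rightarrow> ('v set \<Rightarrow> int) \<Rightarrow> ('v set \<Rightarrow> int) \<Rightarrow> bool" where
  "sig_equiv V E s t \<longleftrightarrow> (\<exists>S\<subseteq>V. \<forall>e\<in>E. t e = switch S s e)"

definition prod_edges :: "'a set \<Rightarrow> 'a set set \<Rightarrow> 'b set \<Rightarrow> 'b set set \<Rightarrow> ('a \<times> 'b) set set" where
  "prod_edges VA EA VB EB =
     {{(a, b1), (a, b2)} | a b1 b2. a \<in> VA \<and> {b1, b2} \<in> EB} \<union>
     {{(a1, b), (a2, b)} | a1 a2 b. {a1, a2} \<in> EA \<and> b \<in> VB}"

text \<open>Signature of the signed Cartesian product: an edge with constant first coordinate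
  is a copy of a B-edge, otherwise a copy of an A-edge.\<close>
definition prod_sig :: "('a set \<Rightarrow> int) \<Rightarrow> ('b set \<Rightarrow> int) \<Rightarrow> ('a \<times> 'b) set \<Rightarrow> int" where
  "prod_sig pA pB e = (if card (fst ` e) = 1 then pB (snd ` e) else pA (fst ` e))"

definition A_copy :: "'a set \<Rightarrow> 'b \<Rightarrow> ('a \<times> 'b) set" where
  "A_copy e b = (\<lambda>a. (a, b)) ` e"

definition B_copy :: "'a \<Rightarrow> 'b set \<Rightarrow> ('a \<times> 'b) set" where
  "B_copy a f = (\<lambda>b. (a, b)) ` f"

definition cycle4 :: "'v set set \<Rightarrow> 'v list \<Rightarrow> bool" where
  "cycle4 E vs \<longleftrightarrow> length vs = 4 \<and> distinct vs \<and>
     (\<forall>i<4. {vs ! i, vs ! ((i + 1) mod 4)} \<in> E)"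

definition cycle_edges :: "'v list \<Rightarrow> 'v set set" where
  "cycle_edges vs = {{vs ! i, vs ! ((i + 1) mod length vs)} | i. i < length vs}"

definition balanced :: "('v set \<Rightarrow> int) \<Rightarrow> 'v list \<Rightarrow> bool" where
  "balanced s vs \<longleftrightarrow> (\<Prod>e\<in>cycle_edges vs. s e) = 1"

end

theory Submission
  imports Defs
begin

definition sw :: "'v set \<Rightarrow> 'v \<Rightarrow> int" where "sw S x = (if x \<in> S then -1 else 1)"

lemma sw_sq: "sw S x * sw S x = 1" by (simp add: sw_def)

lemma switch_pair: "u \<noteq> v \<Longrightarrow> switch S s {u,v} = sw S u * sw S v * s {u,v}"
  unfolding switch_def sw_def
  by (cases "u \<in> S"; cases "v \<in> S"; simp add: Int_insert_left)

lemma cycle_edges4: "cycle_edges [v0,v1,v2,v3] = {{v0,v1},{v1,v2},{v2,v3},{v3,v0}}"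
proof -
  have "cycle_edges [v0,v1,v2,v3] = (\<lambda>i. {[v0,v1,v2,v3] ! i, [v0,v1,v2,v3] ! ((i + 1) mod 4)}) ` {..<4}"
    unfolding cycle_edges_def by auto
  also have "{..<4::nat} = {0,1,2,3}" by auto
  finally show ?thesis by simp
qed

lemma cycle_prod:
  assumes "distinct [v0,v1,v2,v3]"
  shows "(\<Prod>e\<in>cycle_edges [v0,v1,v2,v3]. s e) = s {v0,v1} * s {v1,v2} * s {v2,v3} * s {v3,v0}"
proof -
  have n: "{v0,v1} \<notin> {{v1,v2},{v2,v3},{v3,v0}}" "{v1,v2} \<notin> {{v2,v3},{v3,v0}}" "{v2,v3} \<noteq> {v3,v0}"
    using assms by (auto simp: doubleton_eq_iff)
  show ?thesis unfolding cycle_edges4 using n by (simp add: mult.assoc)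
qed

lemma pm1: "(x::int) \<in> {1,-1} \<Longrightarrow> x * x = 1" by auto

lemma A_copy_pair: "A_copy {a1,a2} b = {(a1,b),(a2,b)}" by (simp add: A_copy_def)
lemma B_copy_pair: "B_copy a {b1,b2} = {(a,b1),(a,b2)}" by (simp add: B_copy_def)

lemma prod_sig_A: "a1 \<noteq> a2 \<Longrightarrow> prod_sig pA pB {(a1,b),(a2,b)} = pA {a1,a2}"
  by (simp add: prod_sig_def)
lemma prod_sig_B: "prod_sig pA pB {(a,b1),(a,b2)} = pB {b1,b2}"
  by (simp add: prod_sig_def)

lemma key_arith:
  fixes gx1 gy1 gx2 gy2 P1 P2 Bx By :: int
  assumes "gx1 = 1 \<or> gx1 = -1" "gy1 = 1 \<or> gy1 = -1" "gx2 = 1 \<or> gx2 = -1" "gy2 = 1 \<or> gy2 = -1"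
    "P1 = 1 \<or> P1 = -1" "P2 = 1 \<or> P2 = -1" "Bx = 1 \<or> Bx = -1" "By = 1 \<or> By = -1"
    "gx1 * gy1 * P1 = gx2 * gy2 * P2" "P1 * By * P2 * Bx = 1"
  shows "gx1 * gx2 * Bx = gy1 * gy2 * By"
  using assms(1-8) apply (elim disjE) using assms(9,10) by simp_all

lemma sw_pm: "sw S x = 1 \<or> sw S x = -1" by (simp add: sw_def)


lemma cycle4_edges:
  assumes "cycle4 E [v0,v1,v2,v3]"
  shows "{v0,v1} \<in> E" "{v1,v2} \<in> E" "{v2,v3} \<in> E" "{v3,v0} \<in> E" "distinct [v0,v1,v2,v3]"
proof -
  have h: "\<And>i. i < 4 \<Longrightarrow> {[v0,v1,v2,v3] ! i, [v0,v1,v2,v3] ! ((i + 1) mod 4)} \<in> E"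
    using assms unfolding cycle4_def by blast
  show "{v0,v1} \<in> E" using h[of 0] by simp
  show "{v1,v2} \<in> E" using h[of 1] by simp
  show "{v2,v3} \<in> E" using h[of 2] by simp
  show "{v3,v0} \<in> E" using h[of 3] by simp
  show "distinct [v0,v1,v2,v3]" using assms unfolding cycle4_def by blast
qed

lemma cycle4I:
  assumes "distinct [v0,v1,v2,v3]" "{v0,v1} \<in> E" "{v1,v2} \<in> E" "{v2,v3} \<in> E" "{v3,v0} \<in> E"
  shows "cycle4 E [v0,v1,v2,v3]"
  unfolding cycle4_def
proof (intro conjI allI impI)
  fix i :: nat assume "i < 4"
  then have "i = 0 \<or> i = 1 \<or> i = 2 \<or> i = 3" by auto
  then show "{[v0,v1,v2,v3] ! i, [v0,v1,v2,v3] ! ((i + 1) mod 4)} \<in> E"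
    using assms by auto
qed (use assms in simp_all)

lemma opp4:
  assumes "X \<in> {{v0,v1},{v1,v2},{v2,v3},{v3,v0}}" "Y \<in> {{v0,v1},{v1,v2},{v2,v3},{v3,v0}}" "X \<inter> Y = {}"
  shows "X = {v0,v1} \<and> Y = {v2,v3} \<or> X = {v2,v3} \<and> Y = {v0,v1} \<or>
         X = {v1,v2} \<and> Y = {v3,v0} \<or> X = {v3,v0} \<and> Y = {v1,v2}"
  using assms by (elim insertE emptyE; simp)

lemma length4: "length vs = 4 \<Longrightarrow> \<exists>v0 v1 v2 v3. vs = [v0,v1,v2,v3]"
  by (cases vs; simp; rename_tac l; case_tac l; simp; rename_tac l; case_tac l; simp;
      rename_tac l; case_tac l; simp)

lemma prod_edge_cases:
  assumes "E \<in> prod_edges VA EA VB EB"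
  obtains (B) a b1 b2 where "E = {(a,b1),(a,b2)}" "a \<in> VA" "{b1,b2} \<in> EB"
    | (A) a1 a2 b where "E = {(a1,b),(a2,b)}" "{a1,a2} \<in> EA" "b \<in> VB"
  using assms unfolding prod_edges_def by blast

lemma edge_ends:
  assumes "simple_graph V E" "{x,y} \<in> E"
  shows "x \<noteq> y" "x \<in> V" "y \<in> V"
proof -
  obtain u v where "{x,y} = {u,v}" "u \<noteq> v" "u \<in> V" "v \<in> V"
    using assms unfolding simple_graph_def by blast
  then show "x \<noteq> y" "x \<in> V" "y \<in> V" by (auto simp: doubleton_eq_iff)
qed

lemma cross_edge:
  assumes "simple_graph VA EA" "simple_graph VB EB"
    "{u,v} \<in> prod_edges VA EA VB EB" "snd u \<noteq> snd v"
  shows "prod_sig pA pB {u,v} = pB {snd u, snd v} \<and> {snd u, snd v} \<in> EB"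
  using assms(3)
proof (cases rule: prod_edge_cases)
  case (B a b1 b2)
  then have "(u = (a,b1) \<and> v = (a,b2)) \<or> (u = (a,b2) \<and> v = (a,b1))"
    by (simp add: doubleton_eq_iff)
  then show ?thesis
  proof (elim disjE conjE)
    assume "u = (a,b1)" "v = (a,b2)"
    then show ?thesis using B(3) by (simp add: prod_sig_B)
  next
    assume "u = (a,b2)" "v = (a,b1)"
    then show ?thesis using B(3) by (simp add: prod_sig_B insert_commute)
  qed
next
  case (A a1 a2 b)
  then have "(u = (a1,b) \<and> v = (a2,b)) \<or> (u = (a2,b) \<and> v = (a1,b))"
    by (simp add: doubleton_eq_iff)
  then show ?thesis using assms(4) by auto
qed

lemma signed_pm: "signature E s \<Longrightarrow> e \<in> E \<Longrightarrow> s e = 1 \<or> s e = -1"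
  unfolding signature_def by blast

theorem lemma4p8:
  fixes VA :: "'a set" and EA :: "'a set set" and pA :: "'a set \<Rightarrow> int"
    and VB :: "'b set" and EB :: "'b set set" and pB :: "'b set \<Rightarrow> int"
    and sigma :: "('a \<times> 'b) set \<Rightarrow> int"
  assumes "simple_graph VA EA" and "connected_graph VA EA" and "signature EA pA"
    and "simple_graph VB EB" and "connected_graph VB EB" and "signature EB pB"
    and "connected_graph (VA \<times> VB) (prod_edges VA EA VB EB)"
    and "signature (prod_edges VA EA VB EB) sigma"
  shows "sig_equiv (VA \<times> VB) (prod_edges VA EA VB EB) sigma (prod_sig pA pB) \<longleftrightarrow>
    ((\<forall>b\<in>VB. sig_equiv VA EA (\<lambda>e. sigma (A_copy e b)) pA) \<and>
     (\<exists>a\<in>VA. sig_equiv VB EB (\<lambda>f. sigma (B_copy a f)) pB) \<and>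
     (\<forall>e\<in>EA. \<forall>b1\<in>VB. \<forall>b2\<in>VB. \<forall>vs. b1 \<noteq> b2 \<and> cycle4 (prod_edges VA EA VB EB) vs \<and>
        A_copy e b1 \<in> cycle_edges vs \<and> A_copy e b2 \<in> cycle_edges vs \<longrightarrow> balanced sigma vs))"
    (is "?L \<longleftrightarrow> ?R")
proof
  let ?PE = "prod_edges VA EA VB EB"
  note sA = assms(1) and sB = assms(4)
  have EAe: "\<And>e. e \<in> EA \<Longrightarrow> \<exists>a1 a2. e = {a1,a2} \<and> a1 \<noteq> a2 \<and> a1 \<in> VA \<and> a2 \<in> VA"
    using sA unfolding simple_graph_def by blast
  have EBe: "\<And>e. e \<in> EB \<Longrightarrow> \<exists>a1 a2. e = {a1,a2} \<and> a1 \<noteq> a2 \<and> a1 \<in> VB \<and> a2 \<in> VB"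
    using sB unfolding simple_graph_def by blast
  have PEe: "\<And>e. e \<in> ?PE \<Longrightarrow> \<exists>u v. e = {u,v} \<and> u \<noteq> v \<and> u \<in> VA \<times> VB \<and> v \<in> VA \<times> VB"
  proof -
    fix e assume "e \<in> ?PE"
    then show "\<exists>u v. e = {u,v} \<and> u \<noteq> v \<and> u \<in> VA \<times> VB \<and> v \<in> VA \<times> VB"
    proof (cases rule: prod_edge_cases)
      case (B a b1 b2) then show ?thesis using edge_ends[OF sB] by fastforce
    next
      case (A a1 a2 b) then show ?thesis using edge_ends[OF sA] by fastforce
    qed
  qed
  {
    assume ?L
    then obtain S where SV: "S \<subseteq> VA \<times> VB"
      and S: "\<And>E. E \<in> ?PE \<Longrightarrow> prod_sig pA pB E = switch S sigma E"
      unfolding sig_equiv_def by blast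
    have R1: "\<forall>b\<in>VB. sig_equiv VA EA (\<lambda>e. sigma (A_copy e b)) pA"
    proof
      fix b assume b: "b \<in> VB"
      show "sig_equiv VA EA (\<lambda>e. sigma (A_copy e b)) pA"
        unfolding sig_equiv_def
      proof (intro exI[of _ "{a \<in> VA. (a,b) \<in> S}"] conjI ballI)
        fix e assume e: "e \<in> EA"
        then obtain a1 a2 where a: "e = {a1,a2}" "a1 \<noteq> a2" "a1 \<in> VA" "a2 \<in> VA"
          using EAe by blast
        have mem: "{(a1,b),(a2,b)} \<in> ?PE" using e a b unfolding prod_edges_def by blast
        have "pA e = prod_sig pA pB {(a1,b),(a2,b)}" using a prod_sig_A by metis
        also have "\<dots> = sw S (a1,b) * sw S (a2,b) * sigma {(a1,b),(a2,b)}"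
          using S[OF mem] switch_pair[of "(a1,b)" "(a2,b)" S sigma] a by simp
        also have "\<dots> = switch {a \<in> VA. (a,b) \<in> S} (\<lambda>e. sigma (A_copy e b)) e"
          using a by (simp add: switch_pair A_copy_pair sw_def)
        finally show "pA e = switch {a \<in> VA. (a,b) \<in> S} (\<lambda>e. sigma (A_copy e b)) e" .
      qed auto
    qed
    obtain a0 where a0: "a0 \<in> VA" using assms(2) unfolding connected_graph_def by blast
    have R2: "sig_equiv VB EB (\<lambda>f. sigma (B_copy a0 f)) pB"
      unfolding sig_equiv_def
    proof (intro exI[of _ "{b \<in> VB. (a0,b) \<in> S}"] conjI ballI)
      fix f assume f: "f \<in> EB"
      then obtain b1 b2 where b: "f = {b1,b2}" "b1 \<noteq> b2" "b1 \<in> VB" "b2 \<in> VB"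
        using EBe by blast
      have mem: "{(a0,b1),(a0,b2)} \<in> ?PE" using f b a0 unfolding prod_edges_def by blast
      have "pB f = prod_sig pA pB {(a0,b1),(a0,b2)}" using b prod_sig_B by metis
      also have "\<dots> = sw S (a0,b1) * sw S (a0,b2) * sigma {(a0,b1),(a0,b2)}"
        using S[OF mem] switch_pair[of "(a0,b1)" "(a0,b2)" S sigma] b by simp
      also have "\<dots> = switch {b \<in> VB. (a0,b) \<in> S} (\<lambda>f. sigma (B_copy a0 f)) f"
        using b by (simp add: switch_pair B_copy_pair sw_def)
      finally show "pB f = switch {b \<in> VB. (a0,b) \<in> S} (\<lambda>f. sigma (B_copy a0 f)) f" .
    qed auto
    have sig_eq: "\<And>u v. {u,v} \<in> ?PE \<Longrightarrow> sigma {u,v} = sw S u * sw S v * prod_sig pA pB {u,v}"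
    proof -
      fix u v assume m: "{u,v} \<in> ?PE"
      then have "u \<noteq> v" using PEe by (metis doubleton_eq_iff insert_absorb2)
      then have "prod_sig pA pB {u,v} = sw S u * sw S v * sigma {u,v}"
        using S[OF m] switch_pair by metis
      then show "sigma {u,v} = sw S u * sw S v * prod_sig pA pB {u,v}"
        using sw_sq[of S u] sw_sq[of S v] by (simp add: algebra_simps)
    qed
    have R3: "\<forall>e\<in>EA. \<forall>b1\<in>VB. \<forall>b2\<in>VB. \<forall>vs. b1 \<noteq> b2 \<and> cycle4 ?PE vs \<and>
        A_copy e b1 \<in> cycle_edges vs \<and> A_copy e b2 \<in> cycle_edges vs \<longrightarrow> balanced sigma vs"
    proof (intro ballI allI impI)
      fix e b1 b2 vs
      assume e: "e \<in> EA" and "b1 \<in> VB" "b2 \<in> VB"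
        and H: "b1 \<noteq> b2 \<and> cycle4 ?PE vs \<and> A_copy e b1 \<in> cycle_edges vs \<and> A_copy e b2 \<in> cycle_edges vs"
      obtain a1 a2 where a: "e = {a1,a2}" "a1 \<noteq> a2" "a1 \<in> VA" "a2 \<in> VA"
        using EAe e by blast
      obtain v0 v1 v2 v3 where vs: "vs = [v0,v1,v2,v3]"
        using H length4 unfolding cycle4_def by blast
      have c: "{v0,v1} \<in> ?PE" "{v1,v2} \<in> ?PE" "{v2,v3} \<in> ?PE" "{v3,v0} \<in> ?PE"
        and d: "distinct [v0,v1,v2,v3]"
        using cycle4_edges[of ?PE v0 v1 v2 v3] H vs by auto
      have ce: "cycle_edges vs = {{v0,v1},{v1,v2},{v2,v3},{v3,v0}}"
        unfolding vs by (rule cycle_edges4)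
      have pA1: "pA e * pA e = 1" using signed_pm[OF assms(3) e] by auto
      have Asig: "\<And>b. prod_sig pA pB (A_copy e b) = pA e"
        using a by (simp add: A_copy_pair prod_sig_A)
      let ?p = "prod_sig pA pB"
      have main: "?p {v0,v1} * ?p {v1,v2} * ?p {v2,v3} * ?p {v3,v0} = 1"
      proof -
        have cr: "\<And>u v. {u,v} \<in> ?PE \<Longrightarrow> snd u \<noteq> snd v \<Longrightarrow> ?p {u,v} * ?p {u,v} = 1"
        proof -
          fix u v assume "{u,v} \<in> ?PE" "snd u \<noteq> snd v"
          then have "?p {u,v} = pB {snd u, snd v} \<and> {snd u, snd v} \<in> EB"
            using cross_edge[OF sA sB] by blast
          then show "?p {u,v} * ?p {u,v} = 1" using signed_pm[OF assms(6)] by fastforce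
        qed
        have crs: "\<And>u v. {u,v} \<in> ?PE \<Longrightarrow> snd u \<noteq> snd v \<Longrightarrow> ?p {v,u} = ?p {u,v}"
          by (simp add: insert_commute)
        have AC: "\<And>x b. x \<in> A_copy e b \<Longrightarrow> snd x = b" unfolding A_copy_def by auto
        have e1: "A_copy e b1 \<in> {{v0,v1},{v1,v2},{v2,v3},{v3,v0}}"
          and e2: "A_copy e b2 \<in> {{v0,v1},{v1,v2},{v2,v3},{v3,v0}}" using H ce by auto
        have nb: "b1 \<noteq> b2" using H by blast
        have disj: "A_copy e b1 \<inter> A_copy e b2 = {}"
        proof (rule equals0I)
          fix x assume "x \<in> A_copy e b1 \<inter> A_copy e b2"
          then show False using AC[of x b1] AC[of x b2] nb by blast
        qed
        show ?thesis
        proof -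
          have case01: "A_copy e b1 = {v0,v1} \<and> A_copy e b2 = {v2,v3} \<or>
                A_copy e b1 = {v2,v3} \<and> A_copy e b2 = {v0,v1} \<or>
                A_copy e b1 = {v1,v2} \<and> A_copy e b2 = {v3,v0} \<or>
                A_copy e b1 = {v3,v0} \<and> A_copy e b2 = {v1,v2}"
            using opp4[OF e1 e2 disj] .
          then show ?thesis
          proof (elim disjE conjE)
            assume h1: "A_copy e b1 = {v0,v1}" and h2: "A_copy e b2 = {v2,v3}"
            have sv: "snd v0 = b1" "snd v1 = b1" "snd v2 = b2" "snd v3 = b2" using AC[of v0 b1] AC[of v1 b1] AC[of v2 b2] AC[of v3 b2] h1 h2 by auto
            have X: "?p {v1,v2} = pB {b1,b2}" using cross_edge[OF sA sB c(2)] sv nb by (simp add: insert_commute)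
            have Y: "?p {v3,v0} = pB {b1,b2}" using cross_edge[OF sA sB c(4)] sv nb by (simp add: insert_commute)
            have "{b1,b2} \<in> EB" using cross_edge[OF sA sB c(2)] sv nb by (simp add: insert_commute)
            then have q: "pB {b1,b2} * pB {b1,b2} = 1" using signed_pm[OF assms(6)] by fastforce
            have "?p {v0,v1} * ?p {v1,v2} * ?p {v2,v3} * ?p {v3,v0} = (pA e * pA e) * (pB {b1,b2} * pB {b1,b2})"
              using X Y Asig[of b1] Asig[of b2] h1 h2 by (simp add: algebra_simps)
            then show ?thesis using pA1 q by simp
          next
            assume h1: "A_copy e b1 = {v2,v3}" and h2: "A_copy e b2 = {v0,v1}"
            have sv: "snd v0 = b2" "snd v1 = b2" "snd v2 = b1" "snd v3 = b1" using AC[of v0 b2] AC[of v1 b2] AC[of v2 b1] AC[of v3 b1] h1 h2 by auto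
            have X: "?p {v1,v2} = pB {b1,b2}" using cross_edge[OF sA sB c(2)] sv nb by (simp add: insert_commute)
            have Y: "?p {v3,v0} = pB {b1,b2}" using cross_edge[OF sA sB c(4)] sv nb by (simp add: insert_commute)
            have "{b1,b2} \<in> EB" using cross_edge[OF sA sB c(2)] sv nb by (simp add: insert_commute)
            then have q: "pB {b1,b2} * pB {b1,b2} = 1" using signed_pm[OF assms(6)] by fastforce
            have "?p {v0,v1} * ?p {v1,v2} * ?p {v2,v3} * ?p {v3,v0} = (pA e * pA e) * (pB {b1,b2} * pB {b1,b2})"
              using X Y Asig[of b1] Asig[of b2] h1 h2 by (simp add: algebra_simps)
            then show ?thesis using pA1 q by simp
          next
            assume h1: "A_copy e b1 = {v1,v2}" and h2: "A_copy e b2 = {v3,v0}"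
            have sv: "snd v1 = b1" "snd v2 = b1" "snd v3 = b2" "snd v0 = b2" using AC[of v1 b1] AC[of v2 b1] AC[of v3 b2] AC[of v0 b2] h1 h2 by auto
            have X: "?p {v0,v1} = pB {b1,b2}" using cross_edge[OF sA sB c(1)] sv nb by (simp add: insert_commute)
            have Y: "?p {v2,v3} = pB {b1,b2}" using cross_edge[OF sA sB c(3)] sv nb by (simp add: insert_commute)
            have "{b1,b2} \<in> EB" using cross_edge[OF sA sB c(1)] sv nb by (simp add: insert_commute)
            then have q: "pB {b1,b2} * pB {b1,b2} = 1" using signed_pm[OF assms(6)] by fastforce
            have "?p {v0,v1} * ?p {v1,v2} * ?p {v2,v3} * ?p {v3,v0} = (pA e * pA e) * (pB {b1,b2} * pB {b1,b2})"
              using X Y Asig[of b1] Asig[of b2] h1 h2 by (simp add: algebra_simps)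
            then show ?thesis using pA1 q by simp
          next
            assume h1: "A_copy e b1 = {v3,v0}" and h2: "A_copy e b2 = {v1,v2}"
            have sv: "snd v3 = b1" "snd v0 = b1" "snd v1 = b2" "snd v2 = b2" using AC[of v3 b1] AC[of v0 b1] AC[of v1 b2] AC[of v2 b2] h1 h2 by auto
            have X: "?p {v0,v1} = pB {b1,b2}" using cross_edge[OF sA sB c(1)] sv nb by (simp add: insert_commute)
            have Y: "?p {v2,v3} = pB {b1,b2}" using cross_edge[OF sA sB c(3)] sv nb by (simp add: insert_commute)
            have "{b1,b2} \<in> EB" using cross_edge[OF sA sB c(1)] sv nb by (simp add: insert_commute)
            then have q: "pB {b1,b2} * pB {b1,b2} = 1" using signed_pm[OF assms(6)] by fastforce
            have "?p {v0,v1} * ?p {v1,v2} * ?p {v2,v3} * ?p {v3,v0} = (pA e * pA e) * (pB {b1,b2} * pB {b1,b2})"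
              using X Y Asig[of b1] Asig[of b2] h1 h2 by (simp add: algebra_simps)
            then show ?thesis using pA1 q by simp
          qed
        qed
      qed
      have "(\<Prod>e\<in>cycle_edges vs. sigma e) = sigma {v0,v1} * sigma {v1,v2} * sigma {v2,v3} * sigma {v3,v0}"
        using cycle_prod[OF d] vs by simp
      also have "\<dots> = (sw S v0 * sw S v0) * (sw S v1 * sw S v1) * (sw S v2 * sw S v2) * (sw S v3 * sw S v3) *
          (?p {v0,v1} * ?p {v1,v2} * ?p {v2,v3} * ?p {v3,v0})"
        using sig_eq[OF c(1)] sig_eq[OF c(2)] sig_eq[OF c(3)] sig_eq[OF c(4)] by (simp add: algebra_simps)
      also have "\<dots> = 1" using main by (simp only: sw_sq mult_1)
      finally show "balanced sigma vs" unfolding balanced_def .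
    qed
    show ?R using R1 R2 R3 a0 by blast
  }
  {
    assume ?R
    then have R1: "\<forall>b\<in>VB. \<exists>S\<subseteq>VA. \<forall>e\<in>EA. pA e = switch S (\<lambda>e. sigma (A_copy e b)) e"
      and R2: "\<exists>a\<in>VA. \<exists>T\<subseteq>VB. \<forall>f\<in>EB. pB f = switch T (\<lambda>f. sigma (B_copy a f)) f"
      and R3: "\<forall>e\<in>EA. \<forall>b1\<in>VB. \<forall>b2\<in>VB. \<forall>vs. b1 \<noteq> b2 \<and> cycle4 ?PE vs \<and>
        A_copy e b1 \<in> cycle_edges vs \<and> A_copy e b2 \<in> cycle_edges vs \<longrightarrow> balanced sigma vs"
      unfolding sig_equiv_def by blast+
    from R1 obtain Sb where Sb: "\<And>b e. b \<in> VB \<Longrightarrow> e \<in> EA \<Longrightarrow> pA e = switch (Sb b) (\<lambda>e. sigma (A_copy e b)) e"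
      by metis
    from R2 obtain a0 T0 where a0: "a0 \<in> VA"
      and T0: "\<And>f. f \<in> EB \<Longrightarrow> pB f = switch T0 (\<lambda>f. sigma (B_copy a0 f)) f" by metis
    define g where "g a b = sw (Sb b) a" for a b
    define t where "t b = sw T0 b * g a0 b" for b
    define h where "h x = g (fst x) (snd x) * t (snd x)" for x
    define S where "S = {x \<in> VA \<times> VB. h x = -1}"
    have gpm: "\<And>a b. g a b = 1 \<or> g a b = -1" unfolding g_def by (rule sw_pm)
    have gsq: "\<And>a b. g a b * g a b = 1" unfolding g_def by (rule sw_sq)
    have tsq: "t b * t b = 1" for b
    proof -
      have "t b * t b = (sw T0 b * sw T0 b) * (g a0 b * g a0 b)" by (simp add: t_def algebra_simps)
      then show ?thesis by (simp only: sw_sq gsq mult_1)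
    qed
    have pmmul: "\<And>a b::int. (a = 1 \<or> a = -1) \<Longrightarrow> (b = 1 \<or> b = -1) \<Longrightarrow> (a * b = 1 \<or> a * b = -1)"
      by auto
    have hpm: "h x = 1 \<or> h x = -1" for x
      unfolding h_def t_def using pmmul[OF gpm pmmul[OF sw_pm gpm]] .
    have swS: "sw S x = h x" if "x \<in> VA \<times> VB" for x
      using hpm[of x] that by (auto simp: sw_def S_def)
    have sigpm: "\<And>E. E \<in> ?PE \<Longrightarrow> sigma E = 1 \<or> sigma E = -1"
      using signed_pm[OF assms(8)] by blast
    have K: "\<And>a b1 b2. a \<in> VA \<Longrightarrow> {b1,b2} \<in> EB \<Longrightarrow>
        g a b1 * g a b2 * sigma (B_copy a {b1,b2}) = g a0 b1 * g a0 b2 * sigma (B_copy a0 {b1,b2})"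
    proof -
      fix a b1 b2 assume a: "a \<in> VA" and f: "{b1,b2} \<in> EB"
      have b: "b1 \<noteq> b2" "b1 \<in> VB" "b2 \<in> VB" using edge_ends[OF sB f] by auto
      define F where "F x = g x b1 * g x b2 * sigma (B_copy x {b1,b2})" for x
      have Fstep: "F x = F y" if xy: "{x,y} \<in> EA" for x y
      proof -
        have xv: "x \<noteq> y" "x \<in> VA" "y \<in> VA" using edge_ends[OF sA xy] by auto
        let ?vs = "[(x,b1),(y,b1),(y,b2),(x,b2)]"
        have m1: "{(x,b1),(y,b1)} \<in> ?PE" using xy b unfolding prod_edges_def by blast
        have m2: "{(y,b1),(y,b2)} \<in> ?PE" using f xv unfolding prod_edges_def by blast
        have m3: "{(y,b2),(x,b2)} \<in> ?PE" using xy b unfolding prod_edges_def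
          by (auto simp: insert_commute)
        have m4: "{(x,b2),(x,b1)} \<in> ?PE" using f xv unfolding prod_edges_def
          by (auto simp: insert_commute)
        have dd: "distinct ?vs" using xv b by auto
        have cyc: "cycle4 ?PE ?vs" by (rule cycle4I[OF dd m1 m2 m3 m4])
        have ce: "cycle_edges ?vs = {{(x,b1),(y,b1)},{(y,b1),(y,b2)},{(y,b2),(x,b2)},{(x,b2),(x,b1)}}"
          by (rule cycle_edges4)
        have "A_copy {x,y} b1 \<in> cycle_edges ?vs" "A_copy {x,y} b2 \<in> cycle_edges ?vs"
          unfolding ce A_copy_pair by (auto simp: insert_commute)
        then have "balanced sigma ?vs" using R3 xy b cyc by blast
        then have bal: "sigma {(x,b1),(y,b1)} * sigma {(y,b1),(y,b2)} * sigma {(y,b2),(x,b2)} * sigma {(x,b2),(x,b1)} = 1"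
          unfolding balanced_def cycle_prod[OF dd, of sigma] .
        have p1: "pA {x,y} = g x b1 * g y b1 * sigma {(x,b1),(y,b1)}"
          using Sb[OF b(2) xy] xv by (simp add: switch_pair g_def A_copy_pair)
        have p2: "pA {x,y} = g x b2 * g y b2 * sigma {(y,b2),(x,b2)}"
          using Sb[OF b(3) xy] xv by (simp add: switch_pair g_def A_copy_pair insert_commute)
        show "F x = F y" unfolding F_def B_copy_pair
        proof (rule key_arith[of "g x b1" "g y b1" "g x b2" "g y b2" "sigma {(x,b1),(y,b1)}" "sigma {(y,b2),(x,b2)}"])
          have e4: "{(x,b2),(x,b1)} = {(x,b1),(x,b2)}" by (rule insert_commute)
          show "sigma {(x,b1),(y,b1)} * sigma {(y,b1),(y,b2)} * sigma {(y,b2),(x,b2)} * sigma {(x,b1),(x,b2)} = 1"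
            using bal unfolding e4 .
          show "g x b1 * g y b1 * sigma {(x,b1),(y,b1)} = g x b2 * g y b2 * sigma {(y,b2),(x,b2)}"
            using p1 p2 by simp
          show "sigma {(x,b1),(x,b2)} = 1 \<or> sigma {(x,b1),(x,b2)} = -1"
            using sigpm[OF m4] unfolding e4 .
          show "sigma {(y,b1),(y,b2)} = 1 \<or> sigma {(y,b1),(y,b2)} = -1"
            using sigpm[OF m2] .
        qed (use gpm sigpm[OF m1] sigpm[OF m3] in auto)
      qed
      have "(a0, a) \<in> {(x, y). {x, y} \<in> EA}\<^sup>*"
        using assms(2) a a0 unfolding connected_graph_def by blast
      then have "F a0 = F a"
      proof (induction rule: rtrancl_induct)
        case base show ?case by simp
      next
        case (step y z) then show ?case using Fstep[of y z] by simp
      qed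
      then show "g a b1 * g a b2 * sigma (B_copy a {b1,b2}) = g a0 b1 * g a0 b2 * sigma (B_copy a0 {b1,b2})"
        unfolding F_def by simp
    qed
    have "\<forall>E\<in>?PE. prod_sig pA pB E = switch S sigma E"
    proof
      fix E assume E: "E \<in> ?PE"
      then show "prod_sig pA pB E = switch S sigma E"
      proof (cases rule: prod_edge_cases)
        case (B a b1 b2)
        have b: "b1 \<noteq> b2" "b1 \<in> VB" "b2 \<in> VB" using edge_ends[OF sB B(3)] by auto
        have "switch S sigma E = h (a,b1) * h (a,b2) * sigma (B_copy a {b1,b2})"
          using B b swS by (simp add: switch_pair B_copy_pair)
        also have "\<dots> = t b1 * t b2 * (g a b1 * g a b2 * sigma (B_copy a {b1,b2}))"
          unfolding h_def by (simp add: algebra_simps)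
        also have "\<dots> = t b1 * t b2 * (g a0 b1 * g a0 b2 * sigma (B_copy a0 {b1,b2}))"
          using K[OF B(2,3)] by simp
        also have "\<dots> = (g a0 b1 * g a0 b1) * (g a0 b2 * g a0 b2) * (sw T0 b1 * sw T0 b2 * sigma (B_copy a0 {b1,b2}))"
          unfolding t_def by (simp add: algebra_simps)
        also have "\<dots> = pB {b1,b2}"
          using T0[OF B(3)] b gsq by (simp add: switch_pair)
        also have "\<dots> = prod_sig pA pB E" using B by (simp add: prod_sig_B)
        finally show ?thesis by simp
      next
        case (A a1 a2 b)
        have a: "a1 \<noteq> a2" "a1 \<in> VA" "a2 \<in> VA" using edge_ends[OF sA A(2)] by auto
        have "switch S sigma E = h (a1,b) * h (a2,b) * sigma (A_copy {a1,a2} b)"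
          using A a swS by (simp add: switch_pair A_copy_pair)
        also have "\<dots> = (t b * t b) * (g a1 b * g a2 b * sigma (A_copy {a1,a2} b))"
          unfolding h_def by (simp add: algebra_simps)
        also have "\<dots> = pA {a1,a2}"
          using Sb[OF A(3) A(2)] a tsq by (simp add: switch_pair g_def)
        also have "\<dots> = prod_sig pA pB E" using A a by (simp add: prod_sig_A)
        finally show ?thesis by simp
      qed
    qed
    moreover have "S \<subseteq> VA \<times> VB" unfolding S_def by blast
    ultimately show ?L unfolding sig_equiv_def by blast
  }
qed

end
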